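(* Let $D$ be an infinite commutative unital integral domain. The weak graded identities $y_1y_2-y_2y_1$, $z_1z_2z_3-z_3z_2z_1$ and $y_1z_1+z_1y_1$ form a basis of the weak graded identities of the pair $(M_2(D),sl_2(D))$; that is, $Id(M_2(D),sl_2(D))$ equals the ideal of weak graded identities generated by these three polynomials.
   Context: Let $Y=\{y_1,y_2,\dots\}$ and $Z=\{z_1,z_2,\dots\}$ be disjoint countable sets of variables, $X=Y\cup Z$, and $D\langle X\rangle$ the free unital associative $D$-algebra on $X$, $\mathbb{Z}_2$-graded with the $y_i$ even and the $z_i$ odd. Let $L\langle X\rangle$ be the Lie subalgebra of $D\langle X\rangle$ (bracket $[a,b]=ab-ba$) generated by $X$, with induced grading $L\langle X\rangle^{(0)}\oplus L\langle X\rangle^{(1)}$. An ideal of weak graded identities is a two-sided ideal $J$ of $D\langle X\rangle$ closed under every algebra endomorphism of $D\langle X\rangle$ mapping each $y_i$ into $L\langle X\rangle^{(0)}$ and each $z_i$ into $L\langle X\rangle^{(1)}$; the ideal of weak graded identities generated by a set of polynomials is the smallest such ideal containing it. $M_2(D)$ is graded with diagonal matrices even and off-diagonal matrices odd; $sl_2(D)$ is the Lie algebra of traceless matrices with the induced grading. $Id(M_2(D),sl_2(D))$ is the set of $f(y_1,\dots,y_k,z_1,\dots,z_m)\in D\langle X\rangle$ vanishing under every substitution of each $y_i$ by an even element of $sl_2(D)$ and each $z_j$ by an odd element of $sl_2(D)$. *)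

theory Defs
  imports "HOL-Analysis.Analysis" "HOL-Library.Poly_Mapping"
begin

text \<open>Variables: Yv i is y_i (even), Zv i is z_i (odd).\<close>
datatype var = Yv nat | Zv nat

datatype word = Word (word_letters: "var list")

instantiation word :: monoid_add
begin
definition zero_word :: word where "zero_word = Word []"
definition plus_word :: "word \<Rightarrow> word \<Rightarrow> word" where
  "plus_word u v = Word (word_letters u @ word_letters v)"
instance
  by standard (simp_all add: zero_word_def plus_word_def)
end

text \<open>D<X>: finitely supported D-valued functions on words, with convolution product
  (i.e. the free unital associative D-algebra on X).\<close>
type_synonym 'a ncpoly = "word \<Rightarrow>\<^sub>0 'a"

definition var :: "var \<Rightarrow> 'a::ring_1 ncpoly" where
  "var v = Poly_Mapping.single (Word [v]) 1"

definition const :: "'a \<Rightarrow> 'a::ring_1 ncpoly" where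
  "const c = Poly_Mapping.single 0 c"

abbreviation yv :: "nat \<Rightarrow> 'a::ring_1 ncpoly" where "yv i \<equiv> var (Yv i)"
abbreviation zv :: "nat \<Rightarrow> 'a::ring_1 ncpoly" where "zv i \<equiv> var (Zv i)"

definition comm :: "'a::ring_1 \<Rightarrow> 'a \<Rightarrow> 'a" where
  "comm a b = a * b - b * a"

definition z_count :: "word \<Rightarrow> nat" where
  "z_count w = length (filter (\<lambda>v. case v of Zv _ \<Rightarrow> True | Yv _ \<Rightarrow> False) (word_letters w))"

text \<open>Homogeneous component of parity p (False = even, True = odd).\<close>
definition homog :: "bool \<Rightarrow> 'a::ring_1 ncpoly set" where
  "homog p = {f. \<forall>w \<in> Poly_Mapping.keys f. odd (z_count w) = p}"

inductive_set lie_alg :: "'a::ring_1 ncpoly set" where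
  gen: "var v \<in> lie_alg"
| zero: "0 \<in> lie_alg"
| add: "f \<in> lie_alg \<Longrightarrow> g \<in> lie_alg \<Longrightarrow> f + g \<in> lie_alg"
| smult: "f \<in> lie_alg \<Longrightarrow> const c * f \<in> lie_alg"
| bracket: "f \<in> lie_alg \<Longrightarrow> g \<in> lie_alg \<Longrightarrow> comm f g \<in> lie_alg"

definition lie_part :: "bool \<Rightarrow> 'a::ring_1 ncpoly set" where
  "lie_part p = lie_alg \<inter> homog p"

definition alg_endo :: "('a::comm_ring_1 ncpoly \<Rightarrow> 'a ncpoly) \<Rightarrow> bool" where
  "alg_endo h \<longleftrightarrow> (\<forall>f g. h (f + g) = h f + h g) \<and> (\<forall>f g. h (f * g) = h f * h g)
     \<and> h 1 = 1 \<and> (\<forall>c f. h (const c * f) = const c * h f)"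

definition graded_endo :: "('a::comm_ring_1 ncpoly \<Rightarrow> 'a ncpoly) \<Rightarrow> bool" where
  "graded_endo h \<longleftrightarrow> alg_endo h \<and> (\<forall>i. h (yv i) \<in> lie_part False) \<and> (\<forall>i. h (zv i) \<in> lie_part True)"

definition two_sided_ideal :: "'a::comm_ring_1 ncpoly set \<Rightarrow> bool" where
  "two_sided_ideal J \<longleftrightarrow> 0 \<in> J \<and> (\<forall>f\<in>J. \<forall>g\<in>J. f + g \<in> J)
     \<and> (\<forall>f\<in>J. \<forall>a b. a * f * b \<in> J)"

definition wg_ideal :: "'a::comm_ring_1 ncpoly set \<Rightarrow> bool" where
  "wg_ideal J \<longleftrightarrow> two_sided_ideal J \<and> (\<forall>h. graded_endo h \<longrightarrow> (\<forall>f\<in>J. h f \<in> J))"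

definition wg_ideal_gen :: "'a::comm_ring_1 ncpoly set \<Rightarrow> 'a ncpoly set" where
  "wg_ideal_gen S = \<Inter> {J. wg_ideal J \<and> S \<subseteq> J}"

type_synonym 'a m2 = "'a ^ 2 ^ 2"

definition smat :: "'a::semiring_1 \<Rightarrow> 'a m2 \<Rightarrow> 'a m2" where
  "smat c M = (\<chi> i j. c * M $ i $ j)"

definition sl2_even :: "'a::comm_ring_1 m2 set" where
  "sl2_even = {M. M $ 1 $ 2 = 0 \<and> M $ 2 $ 1 = 0 \<and> M $ 1 $ 1 + M $ 2 $ 2 = 0}"

text \<open>Odd elements of sl_2(D): off-diagonal matrices (automatically traceless).\<close>
definition sl2_odd :: "'a::comm_ring_1 m2 set" where
  "sl2_odd = {M. M $ 1 $ 1 = 0 \<and> M $ 2 $ 2 = 0}"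

definition word_eval :: "(var \<Rightarrow> 'a::comm_ring_1 m2) \<Rightarrow> word \<Rightarrow> 'a m2" where
  "word_eval \<sigma> w = foldr (\<lambda>v M. \<sigma> v ** M) (word_letters w) (mat 1)"

definition eval :: "(var \<Rightarrow> 'a::comm_ring_1 m2) \<Rightarrow> 'a ncpoly \<Rightarrow> 'a m2" where
  "eval \<sigma> f = (\<Sum>w\<in>Poly_Mapping.keys f. smat (Poly_Mapping.lookup f w) (word_eval \<sigma> w))"

definition Id_M2_sl2 :: "'a::comm_ring_1 ncpoly set" where
  "Id_M2_sl2 = {f. \<forall>\<sigma>. (\<forall>i. \<sigma> (Yv i) \<in> sl2_even) \<and> (\<forall>i. \<sigma> (Zv i) \<in> sl2_odd)
                      \<longrightarrow> eval \<sigma> f = 0}"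

end

theory Submission
  imports Defs "HOL-Computational_Algebra.Polynomial"
begin


definition P :: "var list \<Rightarrow> 'a::comm_ring_1 ncpoly" where
  "P l = Poly_Mapping.single (Word l) 1"

lemma one_ncpoly: "(1::'a::comm_ring_1 ncpoly) = Poly_Mapping.single 0 1"
  by (rule poly_mapping_eqI) (simp add: lookup_one lookup_single when_def eq_commute)

lemma P_append: "P (xs @ ys) = (P xs * P ys :: 'a::comm_ring_1 ncpoly)"
  by (simp add: P_def mult_single plus_word_def)

lemma P_Nil: "P [] = (1::'a::comm_ring_1 ncpoly)"
  by (simp add: P_def one_ncpoly zero_word_def)

lemma P_Cons: "P (v # xs) = (var v * P xs :: 'a::comm_ring_1 ncpoly)"
  using P_append[of "[v]" xs] by (simp add: P_def var_def)

lemma var_P: "var v = P [v]" by (simp add: P_def var_def)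

lemma const_single: "const c * Poly_Mapping.single w d = Poly_Mapping.single w (c * d)"
  by (simp add: const_def mult_single)

lemma single_const: "Poly_Mapping.single w d * const c = Poly_Mapping.single w (d * c)"
  by (simp add: const_def mult_single)

lemma single_eq_const_P: "Poly_Mapping.single w c = (const c * P (word_letters w) :: 'a::comm_ring_1 ncpoly)"
  by (simp add: P_def const_single)

lemma ncpoly_expand: "(f::'a::comm_ring_1 ncpoly) = (\<Sum>w\<in>Poly_Mapping.keys f. Poly_Mapping.single w (Poly_Mapping.lookup f w))"
proof (rule poly_mapping_eqI)
  fix k
  have "Poly_Mapping.lookup (\<Sum>w\<in>Poly_Mapping.keys f. Poly_Mapping.single w (Poly_Mapping.lookup f w)) k
     = (\<Sum>w\<in>Poly_Mapping.keys f. if w = k then Poly_Mapping.lookup f w else 0)"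
    unfolding lookup_sum lookup_single when_def by (rule refl)
  also have "\<dots> = Poly_Mapping.lookup f k"
    by (simp add: sum.delta' not_in_keys_iff_lookup_eq_zero)
  finally show "Poly_Mapping.lookup f k = Poly_Mapping.lookup (\<Sum>w\<in>Poly_Mapping.keys f. Poly_Mapping.single w (Poly_Mapping.lookup f w)) k" by (rule sym)
qed

lemma ncpoly_induct[case_names zero single add]:
  assumes "Q 0" "\<And>w c. Q (Poly_Mapping.single w c)" "\<And>f g. Q f \<Longrightarrow> Q g \<Longrightarrow> Q (f + g)"
  shows "Q (f::'a::comm_ring_1 ncpoly)"
proof -
  have "Q (\<Sum>w\<in>S. Poly_Mapping.single w (Poly_Mapping.lookup f w))" if "finite S" for S
    using that
  proof (induction S rule: finite_induct)
    case empty show ?case using assms(1) by simp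
  next
    case (insert x F)
    have eq: "(\<Sum>w\<in>insert x F. Poly_Mapping.single w (Poly_Mapping.lookup f w)) = Poly_Mapping.single x (Poly_Mapping.lookup f x) + (\<Sum>w\<in>F. Poly_Mapping.single w (Poly_Mapping.lookup f w))"
      by (rule sum.insert[OF insert.hyps])
    show ?case unfolding eq by (rule assms(3)[OF assms(2) insert.IH])
  qed
  then have "Q (\<Sum>w\<in>Poly_Mapping.keys f. Poly_Mapping.single w (Poly_Mapping.lookup f w))" by simp
  then show ?thesis by (simp only: ncpoly_expand[symmetric])
qed

lemma const_comm: "const c * f = f * (const c :: 'a::comm_ring_1 ncpoly)"
proof (induction f rule: ncpoly_induct)
  case (add f g) then show ?case by (simp only: distrib_left distrib_right)
next
  case (single w d) show ?case by (simp only: const_single single_const mult.commute)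
qed (simp)

lemma const_mult: "const c * const d = (const (c*d) :: 'a::comm_ring_1 ncpoly)"
  by (simp add: const_def mult_single)
lemma const_add: "const c + const d = (const (c+d) :: 'a::comm_ring_1 ncpoly)"
  by (simp add: const_def single_add)
lemma const_one: "const 1 = (1 :: 'a::comm_ring_1 ncpoly)"
  by (simp add: const_def)
lemma const_zero: "const 0 = (0 :: 'a::comm_ring_1 ncpoly)"
  by (simp add: const_def)
lemma const_uminus: "const (-c) = (- const c :: 'a::comm_ring_1 ncpoly)"
  by (simp add: const_def single_uminus)




lemma smat_nth[simp]: "smat c M $ i $ j = c * M $ i $ j"
  by (simp add: smat_def)

lemma mm2: "((A::'a::comm_ring_1 m2) ** B) $ i $ j = A$i$1 * B$1$j + A$i$2 * B$2$j"
  by (simp add: matrix_matrix_mult_def sum_2)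

lemma smat_0[simp]: "smat 0 M = (0::'a::comm_ring_1 m2)"
  by (simp add: vec_eq_iff)
lemma smat_1[simp]: "smat 1 M = (M::'a::comm_ring_1 m2)"
  by (simp add: vec_eq_iff)
lemma smat_add: "smat (a+b) M = smat a M + smat b (M::'a::comm_ring_1 m2)"
  by (simp add: vec_eq_iff algebra_simps)
lemma smat_mult: "smat c A ** smat d B = smat (c*d) ((A::'a::comm_ring_1 m2) ** B)"
  by (simp add: vec_eq_iff mm2 algebra_simps)
lemma smat_smat: "smat c (smat d A) = smat (c*d) (A::'a::comm_ring_1 m2)"
  by (simp add: vec_eq_iff algebra_simps)

lemma matrix_add_rdistrib: "((A + B) ** C) = (A ** C) + (B ** (C::'a::comm_ring_1 m2))"
  by (simp add: vec_eq_iff matrix_matrix_mult_def sum.distrib[symmetric] algebra_simps)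

lemma foldr_we: "foldr (\<lambda>v M. \<sigma> v ** M) xs N = foldr (\<lambda>v M. \<sigma> v ** M) xs (mat 1) ** (N::'a::comm_ring_1 m2)"
  by (induction xs) (simp_all add: matrix_mul_assoc)

lemma we_append: "word_eval \<sigma> (Word (xs @ ys)) = word_eval \<sigma> (Word xs) ** (word_eval \<sigma> (Word ys) :: 'a::comm_ring_1 m2)"
  unfolding word_eval_def by (simp add: foldr_we[of _ _ "foldr _ ys _"])

lemma we_Cons: "word_eval \<sigma> (Word (v # ys)) = \<sigma> v ** (word_eval \<sigma> (Word ys) :: 'a::comm_ring_1 m2)"
  unfolding word_eval_def by simp

lemma we_Nil: "word_eval \<sigma> (Word []) = (mat 1 :: 'a::comm_ring_1 m2)"
  unfolding word_eval_def by simp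

lemma we_plus: "word_eval \<sigma> (u + v) = word_eval \<sigma> u ** (word_eval \<sigma> v :: 'a::comm_ring_1 m2)"
  by (cases u; cases v) (simp add: plus_word_def we_append)

lemma eval_superset:
  assumes "finite S" "Poly_Mapping.keys f \<subseteq> S"
  shows "eval \<sigma> (f::'a::comm_ring_1 ncpoly) = (\<Sum>w\<in>S. smat (Poly_Mapping.lookup f w) (word_eval \<sigma> w))"
  unfolding eval_def
  by (rule sum.mono_neutral_left[OF assms(1,2)]) (simp add: not_in_keys_iff_lookup_eq_zero)

lemma eval_add: "eval \<sigma> (f + g) = eval \<sigma> f + eval \<sigma> (g::'a::comm_ring_1 ncpoly)"
proof -
  let ?S = "Poly_Mapping.keys f \<union> Poly_Mapping.keys g"
  have fin: "finite ?S" by simp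
  have k: "Poly_Mapping.keys (f+g) \<subseteq> ?S" by (rule keys_add)
  have "eval \<sigma> f = (\<Sum>w\<in>?S. smat (Poly_Mapping.lookup f w) (word_eval \<sigma> w))"
    by (rule eval_superset[OF fin]) auto
  moreover have "eval \<sigma> g = (\<Sum>w\<in>?S. smat (Poly_Mapping.lookup g w) (word_eval \<sigma> w))"
    by (rule eval_superset[OF fin]) auto
  ultimately show ?thesis
    unfolding eval_superset[OF fin k]
    by (simp add: lookup_add smat_add sum.distrib)
qed

lemma eval_zero[simp]: "eval \<sigma> (0::'a::comm_ring_1 ncpoly) = 0"
  by (simp add: eval_def)

lemma eval_single: "eval \<sigma> (Poly_Mapping.single w c :: 'a::comm_ring_1 ncpoly) = smat c (word_eval \<sigma> w)"
  by (subst eval_superset[of "{w}"]) auto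

lemma eval_mult: "eval \<sigma> (f * g) = eval \<sigma> f ** eval \<sigma> (g::'a::comm_ring_1 ncpoly)"
proof (induction f rule: ncpoly_induct)
  case zero then show ?case by simp
next
  case (add f1 f2) then show ?case
    by (simp add: distrib_right eval_add matrix_add_rdistrib)
next
  case (single u c)
  show ?case
  proof (induction g rule: ncpoly_induct)
    case zero then show ?case by simp
  next
    case (add g1 g2) then show ?case
      by (simp add: distrib_left eval_add matrix_add_ldistrib)
  next
    case (single v d) then show ?case
      by (simp add: mult_single eval_single we_plus smat_mult)
  qed
qed

lemma eval_var[simp]: "eval \<sigma> (var v :: 'a::comm_ring_1 ncpoly) = \<sigma> v"
  by (simp add: var_def eval_single we_Cons we_Nil)

lemma eval_P: "eval \<sigma> (P l :: 'a::comm_ring_1 ncpoly) = word_eval \<sigma> (Word l)"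
  by (simp add: P_def eval_single)

lemma eval_one[simp]: "eval \<sigma> (1 :: 'a::comm_ring_1 ncpoly) = mat 1"
  using eval_P[of \<sigma> "[]"] by (simp add: P_Nil we_Nil)

lemma eval_const_mult: "eval \<sigma> (const c * f) = smat c (eval \<sigma> (f :: 'a::comm_ring_1 ncpoly))"
proof -
  have "eval \<sigma> (const c * f) = smat c (mat 1) ** smat 1 (eval \<sigma> f)"
    by (simp add: eval_mult const_def eval_single we_Nil[unfolded zero_word_def[symmetric]])
  also have "\<dots> = smat c (eval \<sigma> f)" by (simp only: smat_mult) simp
  finally show ?thesis .
qed

lemma eval_uminus: "eval \<sigma> (- f) = - eval \<sigma> (f :: 'a::comm_ring_1 ncpoly)"
proof -
  have "eval \<sigma> (f + - f) = 0" by simp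
  then show ?thesis unfolding eval_add by (simp add: add_eq_0_iff)
qed

lemma eval_diff: "eval \<sigma> (f - g) = eval \<sigma> f - eval \<sigma> (g :: 'a::comm_ring_1 ncpoly)"
  using eval_add[of \<sigma> f "-g"] by (simp add: eval_uminus)

lemma eval_sum: "eval \<sigma> (\<Sum>x\<in>A. F x) = (\<Sum>x\<in>A. eval \<sigma> (F x :: 'a::comm_ring_1 ncpoly))"
  by (induction A rule: infinite_finite_induct) (simp_all add: eval_add)

lemma alg_endo_zero: "alg_endo h \<Longrightarrow> h 0 = 0"
  unfolding alg_endo_def by (metis add_cancel_right_right add_0)

lemma eval_endo:
  assumes h: "alg_endo h"
  shows "eval \<sigma> (h f) = eval (\<lambda>v. eval \<sigma> (h (var v))) (f :: 'a::comm_ring_1 ncpoly)"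
proof -
  let ?s = "\<lambda>v. eval \<sigma> (h (var v))"
  have P: "eval \<sigma> (h (P l)) = word_eval ?s (Word l)" for l
  proof (induction l)
    case Nil then show ?case using h by (simp add: P_Nil alg_endo_def we_Nil)
  next
    case (Cons v l) then show ?case using h by (simp add: P_Cons alg_endo_def we_Cons eval_mult)
  qed
  show ?thesis
  proof (induction f rule: ncpoly_induct)
    case zero then show ?case using alg_endo_zero[OF h] by simp
  next
    case (single w c)
    have e: "h (const c * P (word_letters w)) = const c * h (P (word_letters w))"
      using h unfolding alg_endo_def by blast
    show ?case unfolding single_eq_const_P[of w c] e eval_const_mult P
      by (simp add: eval_P)
  next
    case (add f g) then show ?case using h by (simp add: alg_endo_def eval_add)
  qed
qed

definition valid :: "(var \<Rightarrow> 'a::comm_ring_1 m2) \<Rightarrow> bool" where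
  "valid \<sigma> \<longleftrightarrow> (\<forall>i. \<sigma> (Yv i) \<in> sl2_even) \<and> (\<forall>i. \<sigma> (Zv i) \<in> sl2_odd)"

definition isdiag :: "'a::comm_ring_1 m2 \<Rightarrow> bool" where
  "isdiag M \<longleftrightarrow> M$1$2 = 0 \<and> M$2$1 = 0"
definition isanti :: "'a::comm_ring_1 m2 \<Rightarrow> bool" where
  "isanti M \<longleftrightarrow> M$1$1 = 0 \<and> M$2$2 = 0"

lemma z_count_Cons: "z_count (Word (v # l)) = (case v of Zv _ \<Rightarrow> 1 | Yv _ \<Rightarrow> 0) + z_count (Word l)"
  by (cases v) (simp_all add: z_count_def)

lemma we_parity:
  assumes "valid \<sigma>"
  shows "(if even (z_count w) then isdiag else isanti) (word_eval \<sigma> w)"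
proof (cases w)
  case (Word l)
  show ?thesis unfolding Word
  proof (induction l)
    case Nil then show ?case by (simp add: z_count_def we_Nil isdiag_def mat_def)
  next
    case (Cons v l)
    show ?case
    proof (cases v)
      case (Yv i)
      have "\<sigma> v \<in> sl2_even" using assms Yv by (simp add: valid_def)
      then show ?thesis using Cons.IH unfolding Yv
        by (auto simp: z_count_Cons we_Cons isdiag_def isanti_def sl2_even_def mm2 split: if_splits)
    next
      case (Zv i)
      have "\<sigma> v \<in> sl2_odd" using assms Zv by (simp add: valid_def)
      then show ?thesis using Cons.IH unfolding Zv
        by (auto simp: z_count_Cons we_Cons isdiag_def isanti_def sl2_odd_def mm2 split: if_splits)
    qed
  qed
qed

lemma eval_homog:
  assumes "valid \<sigma>" "f \<in> homog p"
  shows "(if p then isanti else isdiag) (eval \<sigma> (f :: 'a::comm_ring_1 ncpoly))"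
proof -
  have "\<forall>w\<in>Poly_Mapping.keys f. (if p then isanti else isdiag) (word_eval \<sigma> w)"
  proof
    fix w assume "w \<in> Poly_Mapping.keys f"
    then have "odd (z_count w) = p" using assms(2) by (simp add: homog_def)
    then show "(if p then isanti else isdiag) (word_eval \<sigma> w)"
      using we_parity[OF assms(1), of w] by (cases p) auto
  qed
  then show ?thesis unfolding eval_def
    by (auto simp: isdiag_def isanti_def intro!: sum.neutral)
qed

definition tr :: "'a::comm_ring_1 m2 \<Rightarrow> 'a" where "tr M = M$1$1 + M$2$2"

lemma eval_comm: "eval \<sigma> (comm f g) = eval \<sigma> f ** eval \<sigma> g - eval \<sigma> g ** eval \<sigma> (f :: 'a::comm_ring_1 ncpoly)"
  by (simp add: comm_def eval_diff eval_mult)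

lemma lie_tr:
  assumes "valid \<sigma>" "f \<in> lie_alg"
  shows "tr (eval \<sigma> (f :: 'a::comm_ring_1 ncpoly)) = 0"
  using assms(2)
proof (induction f rule: lie_alg.induct)
  case (gen v) then show ?case using assms(1)
    by (cases v) (auto simp: valid_def sl2_even_def sl2_odd_def tr_def)
next
  case zero then show ?case by (simp add: tr_def)
next
  case (add f g) then show ?case by (simp add: eval_add tr_def algebra_simps)
next
  case (smult f c) then show ?case by (simp add: eval_const_mult tr_def flip: distrib_left)
next
  case (bracket f g) then show ?case by (simp add: eval_comm tr_def mm2 algebra_simps)
qed

lemma valid_endo:
  assumes "valid \<sigma>" "graded_endo h"
  shows "valid (\<lambda>v. eval \<sigma> (h (var v :: 'a::comm_ring_1 ncpoly)))"
proof -
  have "eval \<sigma> (h (yv i)) \<in> sl2_even" for i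
  proof -
    have "h (yv i) \<in> lie_alg" "h (yv i) \<in> homog False" using assms(2) by (auto simp: graded_endo_def lie_part_def)
    from lie_tr[OF assms(1) this(1)] eval_homog[OF assms(1) this(2)]
    show ?thesis by (simp add: sl2_even_def tr_def isdiag_def)
  qed
  moreover have "eval \<sigma> (h (zv i)) \<in> sl2_odd" for i
  proof -
    have "h (zv i) \<in> homog True" using assms(2) by (auto simp: graded_endo_def lie_part_def)
    from eval_homog[OF assms(1) this]
    show ?thesis by (simp add: sl2_odd_def isanti_def)
  qed
  ultimately show ?thesis by (simp add: valid_def)
qed

lemma Id_alt: "Id_M2_sl2 = {f. \<forall>\<sigma>. valid \<sigma> \<longrightarrow> eval \<sigma> f = 0}"
  by (simp add: Id_M2_sl2_def valid_def)

lemma Id_endo: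
  assumes h: "graded_endo h" and f: "f \<in> (Id_M2_sl2 :: 'a::comm_ring_1 ncpoly set)"
  shows "h f \<in> Id_M2_sl2"
  unfolding Id_alt
proof (intro CollectI allI impI)
  fix \<sigma> :: "var \<Rightarrow> 'a m2" assume v: "valid \<sigma>"
  have a: "alg_endo h" using h by (simp add: graded_endo_def)
  have "eval (\<lambda>v. eval \<sigma> (h (var v))) f = 0"
    using f valid_endo[OF v h] unfolding Id_alt by blast
  then show "eval \<sigma> (h f) = 0" by (rule trans[OF eval_endo[OF a]])
qed

lemma Id_zero: "0 \<in> (Id_M2_sl2 :: 'a::comm_ring_1 ncpoly set)"
  unfolding Id_alt by simp

lemma Id_add: "f \<in> Id_M2_sl2 \<Longrightarrow> g \<in> Id_M2_sl2 \<Longrightarrow> f + g \<in> (Id_M2_sl2 :: 'a::comm_ring_1 ncpoly set)"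
  unfolding Id_alt by (simp add: eval_add)

lemma Id_mult: "f \<in> Id_M2_sl2 \<Longrightarrow> a * f * b \<in> (Id_M2_sl2 :: 'a::comm_ring_1 ncpoly set)"
  unfolding Id_alt by (simp add: eval_mult)

lemma Id_wg: "wg_ideal (Id_M2_sl2 :: 'a::comm_ring_1 ncpoly set)"
  unfolding wg_ideal_def two_sided_ideal_def
  using Id_zero Id_add Id_mult Id_endo by blast




lemma gens_Id:
  "{comm (yv 1) (yv 2), zv 1 * zv 2 * zv 3 - zv 3 * zv 2 * zv 1, yv 1 * zv 1 + zv 1 * yv 1}
    \<subseteq> (Id_M2_sl2 :: 'a::comm_ring_1 ncpoly set)"
proof -
  have "eval \<sigma> (comm (yv 1) (yv 2) :: 'a ncpoly) = 0 \<and>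
        eval \<sigma> (zv 1 * zv 2 * zv 3 - zv 3 * zv 2 * zv 1 :: 'a ncpoly) = 0 \<and>
        eval \<sigma> (yv 1 * zv 1 + zv 1 * yv 1 :: 'a ncpoly) = 0" if v: "valid \<sigma>" for \<sigma>
  proof -
    have e: "\<sigma> (Yv i) $ 1 $ 2 = 0" "\<sigma> (Yv i) $ 2 $ 1 = 0" "\<sigma> (Yv i) $ 2 $ 2 = - \<sigma> (Yv i) $ 1 $ 1"
         "\<sigma> (Zv i) $ 1 $ 1 = 0" "\<sigma> (Zv i) $ 2 $ 2 = 0" for i
      using v unfolding valid_def sl2_even_def sl2_odd_def
      by (auto simp: eq_neg_iff_add_eq_0 add.commute)
    show ?thesis
      by (simp add: eval_comm eval_mult eval_add eval_diff vec_eq_iff forall_2 mm2 e algebra_simps)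
  qed
  then show ?thesis unfolding Id_alt by auto
qed




definition ren :: "(var \<Rightarrow> var) \<Rightarrow> 'a::comm_ring_1 ncpoly \<Rightarrow> 'a ncpoly" where
  "ren \<rho> f = (\<Sum>w\<in>Poly_Mapping.keys f. Poly_Mapping.single (Word (map \<rho> (word_letters w))) (Poly_Mapping.lookup f w))"

lemma ren_superset:
  assumes "finite S" "Poly_Mapping.keys f \<subseteq> S"
  shows "ren \<rho> (f::'a::comm_ring_1 ncpoly) = (\<Sum>w\<in>S. Poly_Mapping.single (Word (map \<rho> (word_letters w))) (Poly_Mapping.lookup f w))"
  unfolding ren_def
  by (rule sum.mono_neutral_left[OF assms(1,2)]) (simp add: not_in_keys_iff_lookup_eq_zero)

lemma ren_add: "ren \<rho> (f + g) = ren \<rho> f + ren \<rho> (g::'a::comm_ring_1 ncpoly)"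
proof -
  let ?S = "Poly_Mapping.keys f \<union> Poly_Mapping.keys g"
  have fin: "finite ?S" by simp
  have k: "Poly_Mapping.keys (f+g) \<subseteq> ?S" by (rule keys_add)
  have "ren \<rho> f = (\<Sum>w\<in>?S. Poly_Mapping.single (Word (map \<rho> (word_letters w))) (Poly_Mapping.lookup f w))"
    by (rule ren_superset[OF fin]) auto
  moreover have "ren \<rho> g = (\<Sum>w\<in>?S. Poly_Mapping.single (Word (map \<rho> (word_letters w))) (Poly_Mapping.lookup g w))"
    by (rule ren_superset[OF fin]) auto
  ultimately show ?thesis
    unfolding ren_superset[OF fin k]
    by (simp add: lookup_add single_add sum.distrib)
qed

lemma ren_zero[simp]: "ren \<rho> (0::'a::comm_ring_1 ncpoly) = 0"
  by (simp add: ren_def)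

lemma ren_single: "ren \<rho> (Poly_Mapping.single w c :: 'a::comm_ring_1 ncpoly) = Poly_Mapping.single (Word (map \<rho> (word_letters w))) c"
  by (subst ren_superset[of "{w}"]) auto

lemma ren_mult: "ren \<rho> (f * g) = ren \<rho> f * ren \<rho> (g::'a::comm_ring_1 ncpoly)"
proof (induction f rule: ncpoly_induct)
  case zero then show ?case by simp
next
  case (add f1 f2) then show ?case
    by (simp add: distrib_right ren_add)
next
  case (single u c)
  show ?case
  proof (induction g rule: ncpoly_induct)
    case zero then show ?case by simp
  next
    case (add g1 g2) then show ?case
      by (simp add: distrib_left ren_add)
  next
    case (single v d) then show ?case
      by (simp add: mult_single ren_single plus_word_def)
  qed
qed

lemma ren_one: "ren \<rho> (1 :: 'a::comm_ring_1 ncpoly) = 1"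
  by (simp add: one_ncpoly ren_single zero_word_def)

lemma ren_const: "ren \<rho> (const c :: 'a::comm_ring_1 ncpoly) = const c"
  by (simp add: const_def ren_single zero_word_def)

lemma ren_var: "ren \<rho> (var v :: 'a::comm_ring_1 ncpoly) = var (\<rho> v)"
  by (simp add: var_def ren_single)

lemma ren_uminus: "ren \<rho> (- f) = - ren \<rho> (f :: 'a::comm_ring_1 ncpoly)"
proof -
  have "ren \<rho> (f + - f) = 0" by simp
  then show ?thesis unfolding ren_add by (simp add: add_eq_0_iff)
qed

lemma ren_diff: "ren \<rho> (f - g) = ren \<rho> f - ren \<rho> (g :: 'a::comm_ring_1 ncpoly)"
  using ren_add[of \<rho> f "-g"] by (simp add: ren_uminus)

lemma alg_endo_ren: "alg_endo (ren \<rho> :: 'a::comm_ring_1 ncpoly \<Rightarrow> _)"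
  unfolding alg_endo_def by (simp add: ren_add ren_mult ren_one ren_const)

definition rn :: "(nat \<Rightarrow> nat) \<Rightarrow> (nat \<Rightarrow> nat) \<Rightarrow> var \<Rightarrow> var" where
  "rn fy fz v = (case v of Yv i \<Rightarrow> Yv (fy i) | Zv i \<Rightarrow> Zv (fz i))"

lemma keys_var: "Poly_Mapping.keys (var v :: 'a::comm_ring_1 ncpoly) = {Word [v]}"
  by (simp add: var_def)

lemma var_lie_part: "var (Yv i) \<in> (lie_part False :: 'a::comm_ring_1 ncpoly set)"
     "var (Zv i) \<in> (lie_part True :: 'a::comm_ring_1 ncpoly set)"
  by (auto simp: lie_part_def homog_def keys_var z_count_def intro: lie_alg.gen)

lemma graded_ren: "graded_endo (ren (rn fy fz) :: 'a::comm_ring_1 ncpoly \<Rightarrow> _)"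
  unfolding graded_endo_def by (simp add: alg_endo_ren ren_var rn_def var_lie_part)

lemma ideal_minus: "two_sided_ideal J \<Longrightarrow> f \<in> J \<Longrightarrow> - f \<in> J"
  unfolding two_sided_ideal_def by (metis mult_1_right mult_minus1)

lemma ideal_diff: "two_sided_ideal J \<Longrightarrow> f \<in> J \<Longrightarrow> g \<in> J \<Longrightarrow> f - g \<in> J"
  using ideal_minus[of J g] unfolding two_sided_ideal_def by (metis diff_conv_add_uminus)

lemma ideal_lmult: "two_sided_ideal J \<Longrightarrow> f \<in> J \<Longrightarrow> a * f \<in> J"
  unfolding two_sided_ideal_def by (metis mult_1_right)

lemma ideal_rmult: "two_sided_ideal J \<Longrightarrow> f \<in> J \<Longrightarrow> f * b \<in> J"
  unfolding two_sided_ideal_def by (metis mult_1_left)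

locale relJ =
  fixes J :: "'a::comm_ring_1 ncpoly set"
  assumes wg: "wg_ideal J"
  and gens: "{comm (yv 1) (yv 2), zv 1 * zv 2 * zv 3 - zv 3 * zv 2 * zv 1, yv 1 * zv 1 + zv 1 * yv 1} \<subseteq> J"
begin

lemma tsi: "two_sided_ideal J" using wg by (simp add: wg_ideal_def)

lemma ren_in: "f \<in> J \<Longrightarrow> ren (rn fy fz) f \<in> J"
  using wg graded_ren unfolding wg_ideal_def by blast

lemma R1: "comm (yv i) (yv j) \<in> J"
proof -
  have "ren (rn ((\<lambda>n. n)(1:=i, 2:=j)) (\<lambda>n. n)) (comm (yv 1) (yv 2)) \<in> J"
    using gens by (intro ren_in) auto
  then show ?thesis by (simp add: comm_def ren_diff ren_mult ren_var rn_def)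
qed

lemma R2: "zv a * zv b * zv c - zv c * zv b * zv a \<in> J"
proof -
  have "ren (rn (\<lambda>n. n) ((\<lambda>n. n)(1:=a, 2:=b, 3:=c))) (zv 1 * zv 2 * zv 3 - zv 3 * zv 2 * zv 1) \<in> J"
    using gens by (intro ren_in) auto
  then show ?thesis by (simp add: ren_diff ren_mult ren_var rn_def)
qed

lemma R3: "yv i * zv j + zv j * yv i \<in> J"
proof -
  have "ren (rn ((\<lambda>n. n)(1:=i)) ((\<lambda>n. n)(1:=j))) (yv 1 * zv 1 + zv 1 * yv 1) \<in> J"
    using gens by (intro ren_in) auto
  then show ?thesis by (simp add: ren_add ren_mult ren_var rn_def)
qed

end




function alt :: "'a list \<Rightarrow> 'a list \<Rightarrow> 'a list" where
  "alt [] ys = ys"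
| "alt (x # xs) ys = x # alt ys xs"
  by pat_completeness auto
termination by (relation "Wellfounded.measure (\<lambda>(xs, ys). length xs + length ys)") auto

fun odds :: "'a list \<Rightarrow> 'a list" and evens :: "'a list \<Rightarrow> 'a list" where
  "odds [] = []"
| "odds (x # xs) = x # evens xs"
| "evens [] = []"
| "evens (x # xs) = odds xs"

lemma alt_odds_evens: "alt (odds l) (evens l) = l \<and> length (evens l) \<le> length (odds l) \<and> length (odds l) \<le> length (evens l) + 1"
  by (induction l) auto

definition yidx :: "var list \<Rightarrow> nat list" where
  "yidx l = concat (map (\<lambda>v. case v of Yv i \<Rightarrow> [i] | Zv _ \<Rightarrow> []) l)"
definition zidx :: "var list \<Rightarrow> nat list" where
  "zidx l = concat (map (\<lambda>v. case v of Zv i \<Rightarrow> [i] | Yv _ \<Rightarrow> []) l)"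

lemma yidx_simps[simp]: "yidx [] = []" "yidx (Yv i # l) = i # yidx l" "yidx (Zv i # l) = yidx l"
  by (simp_all add: yidx_def)
lemma zidx_simps[simp]: "zidx [] = []" "zidx (Yv i # l) = zidx l" "zidx (Zv i # l) = i # zidx l"
  by (simp_all add: zidx_def)

type_synonym cont = "nat multiset \<times> nat multiset \<times> nat multiset"

definition cont :: "var list \<Rightarrow> cont" where
  "cont l = (mset (yidx l), mset (odds (zidx l)), mset (evens (zidx l)))"

definition canon :: "cont \<Rightarrow> var list" where
  "canon \<kappa> = map Yv (sorted_list_of_multiset (fst \<kappa>)) @
     map Zv (alt (sorted_list_of_multiset (fst (snd \<kappa>))) (sorted_list_of_multiset (snd (snd \<kappa>))))"

lemma const_mid: "a * (const s * b) = const s * (a * (b :: 'a::comm_ring_1 ncpoly))"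
  by (metis mult.assoc const_comm)

context relJ
begin

definition cg :: "'a ncpoly \<Rightarrow> 'a ncpoly \<Rightarrow> bool" where "cg f g \<longleftrightarrow> f - g \<in> J"

lemma cg_refl: "cg f f" using tsi by (simp add: cg_def two_sided_ideal_def)
lemma cg_sym: "cg f g \<Longrightarrow> cg g f"
  unfolding cg_def using ideal_minus[OF tsi] by (metis minus_diff_eq)
lemma cg_trans: "cg f g \<Longrightarrow> cg g h \<Longrightarrow> cg f h"
proof -
  assume a: "cg f g" "cg g h"
  have "f - h = (f - g) + (g - h)" by simp
  then show ?thesis using a tsi unfolding cg_def two_sided_ideal_def by metis
qed
lemma cg_lmult: "cg f g \<Longrightarrow> cg (a * f) (a * g)"
  unfolding cg_def using ideal_lmult[OF tsi] by (metis right_diff_distrib)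
lemma cg_rmult: "cg f g \<Longrightarrow> cg (f * a) (g * a)"
  unfolding cg_def using ideal_rmult[OF tsi] by (metis left_diff_distrib)
lemma cg_minus: "cg f g \<Longrightarrow> cg (- f) (- g)"
  unfolding cg_def using ideal_minus[OF tsi] by (metis minus_diff_minus minus_diff_eq)
lemma cg_add: "cg f g \<Longrightarrow> cg f' g' \<Longrightarrow> cg (f + f') (g + g')"
  unfolding cg_def using tsi unfolding two_sided_ideal_def by (metis add_diff_add)
lemma cg_const: "cg f g \<Longrightarrow> cg (const s * f) (const s * g)"
  by (rule cg_lmult)

lemma swap_zy: "cg (P (Zv j # Yv i # X)) (- P (Yv i # Zv j # X))"
proof -
  have "(yv i * zv j + zv j * yv i) * P X \<in> J" using R3 ideal_rmult[OF tsi] by blast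
  then show ?thesis unfolding cg_def by (simp add: P_Cons distrib_right mult.assoc add.commute)
qed

lemma move_z: "cg (P (Zv j # map Yv ys @ X)) (const ((-1) ^ length ys) * P (map Yv ys @ Zv j # X))"
proof (induction ys arbitrary: X)
  case Nil then show ?case by (simp add: const_one cg_refl)
next
  case (Cons i ys)
  have "cg (P (Zv j # Yv i # map Yv ys @ X)) (- P (Yv i # Zv j # map Yv ys @ X))"
    by (rule swap_zy)
  also have "- P (Yv i # Zv j # map Yv ys @ X) = - (var (Yv i) * P (Zv j # map Yv ys @ X))"
    by (simp add: P_Cons)
  finally have 1: "cg (P (Zv j # Yv i # map Yv ys @ X)) (- (var (Yv i) * P (Zv j # map Yv ys @ X)))" .
  have 2: "cg (- (var (Yv i) * P (Zv j # map Yv ys @ X)))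
     (- (var (Yv i) * (const ((-1) ^ length ys) * P (map Yv ys @ Zv j # X))))"
    by (intro cg_minus cg_lmult Cons.IH)
  have 3: "- (var (Yv i) * (const ((-1) ^ length ys) * P (map Yv ys @ Zv j # X))) =
     const ((-1) ^ length (i # ys)) * P (map Yv (i # ys) @ Zv j # X)"
    by (simp add: const_mid P_Cons const_uminus)
  show ?case using cg_trans[OF 1 2] unfolding 3 by simp
qed

lemma sepYZ: "\<exists>s. cg (P l) (const s * P (map Yv (yidx l) @ map Zv (zidx l)))"
proof (induction l)
  case Nil then show ?case by (rule exI[of _ 1]) (simp add: const_one cg_refl)
next
  case (Cons v l)
  then obtain s where s: "cg (P l) (const s * P (map Yv (yidx l) @ map Zv (zidx l)))" by blast
  show ?case
  proof (cases v)
    case (Yv i)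
    have "cg (P (v # l)) (var v * (const s * P (map Yv (yidx l) @ map Zv (zidx l))))"
      unfolding P_Cons by (rule cg_lmult[OF s])
    then show ?thesis unfolding Yv by (intro exI[of _ s]) (simp add: const_mid P_Cons)
  next
    case (Zv j)
    have 1: "cg (P (v # l)) (const s * P (Zv j # map Yv (yidx l) @ map Zv (zidx l)))"
      using cg_lmult[OF s, of "var v"] unfolding Zv by (simp add: const_mid P_Cons)
    have 2: "cg (const s * P (Zv j # map Yv (yidx l) @ map Zv (zidx l)))
      (const s * (const ((-1) ^ length (yidx l)) * P (map Yv (yidx l) @ Zv j # map Zv (zidx l))))"
      by (intro cg_const move_z)
    show ?thesis using cg_trans[OF 1 2] unfolding Zv
      by (intro exI[of _ "s * (-1) ^ length (yidx l)"]) (simp add: mult.assoc[symmetric] const_mult)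
  qed
qed

lemma insY: "cg (P (Yv a # map Yv l @ X)) (P (map Yv (insort a l) @ X))"
proof (induction l arbitrary: X)
  case Nil then show ?case by (simp add: cg_refl)
next
  case (Cons b l)
  show ?case
  proof (cases "a \<le> b")
    case True then show ?thesis by (simp add: cg_refl)
  next
    case False
    have 1: "cg (P (Yv a # Yv b # map Yv l @ X)) (P (Yv b # Yv a # map Yv l @ X))"
    proof -
      have "comm (yv a) (yv b) * P (map Yv l @ X) \<in> J" using R1 ideal_rmult[OF tsi] by blast
      then show ?thesis unfolding cg_def by (simp add: P_Cons comm_def left_diff_distrib mult.assoc)
    qed
    have 2: "cg (P (Yv b # Yv a # map Yv l @ X)) (P (Yv b # map Yv (insort a l) @ X))"
      unfolding P_Cons[of "Yv b"] by (intro cg_lmult) (simp add: Cons.IH)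
    show ?thesis using cg_trans[OF 1 2] False by simp
  qed
qed

lemma sortY: "cg (P (map Yv ys @ X)) (P (map Yv (sort ys) @ X))"
proof (induction ys arbitrary: X)
  case Nil then show ?case by (simp add: cg_refl)
next
  case (Cons a ys)
  have 1: "cg (P (map Yv (a # ys) @ X)) (P (Yv a # map Yv (sort ys) @ X))"
    using cg_lmult[OF Cons.IH[of X], of "var (Yv a)"] by (simp add: P_Cons)
  show ?case using cg_trans[OF 1 insY] by simp
qed

lemma swap_zzz: "cg (P (Zv a # Zv e # Zv b # X)) (P (Zv b # Zv e # Zv a # X))"
proof -
  have "(zv a * zv e * zv b - zv b * zv e * zv a) * P X \<in> J" using R2 ideal_rmult[OF tsi] by blast
  then show ?thesis unfolding cg_def by (simp add: P_Cons left_diff_distrib mult.assoc)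
qed

lemma insZ: "length l \<le> length es \<Longrightarrow> cg (P (map Zv (alt (a # l) es))) (P (map Zv (alt (insort a l) es)))"
proof (induction l arbitrary: a es)
  case Nil then show ?case by (simp add: cg_refl)
next
  case (Cons b l)
  show ?case
  proof (cases "a \<le> b")
    case True then show ?thesis by (simp add: cg_refl)
  next
    case False
    from Cons.prems obtain e es' where es: "es = e # es'" by (cases es) auto
    have le: "length l \<le> length es'" using Cons.prems es by simp
    have 1: "cg (P (map Zv (alt (a # b # l) es))) (P (Zv b # Zv e # map Zv (alt (a # l) es')))"
      using swap_zzz[of a e b "map Zv (alt es' l)"] unfolding es by simp
    have 2: "cg (P (Zv b # Zv e # map Zv (alt (a # l) es'))) (P (Zv b # Zv e # map Zv (alt (insort a l) es')))"
      unfolding P_Cons by (intro cg_lmult Cons.IH le)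
    show ?thesis using cg_trans[OF 1 2] False es by simp
  qed
qed

lemma sortZ: "length xs \<le> length es + 1 \<Longrightarrow> cg (P (map Zv (alt xs es))) (P (map Zv (alt (sort xs) es)))"
proof (induction xs arbitrary: es)
  case Nil then show ?case by (simp add: cg_refl)
next
  case (Cons a xs)
  show ?case
  proof (cases es)
    case Nil
    then have "xs = []" using Cons.prems by simp
    then show ?thesis using Nil by (simp add: cg_refl)
  next
    case (Cons e es')
    have 1: "cg (P (map Zv (alt (a # xs) es))) (P (map Zv (alt (a # sort xs) es)))"
      using cg_lmult[OF Cons.IH[of es'], of "var (Zv a) * var (Zv e)"] Cons.prems unfolding Cons
      by (simp add: P_Cons mult.assoc)
    have 2: "cg (P (map Zv (alt (a # sort xs) es))) (P (map Zv (alt (insort a (sort xs)) es)))"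
      using Cons.prems by (intro insZ) simp
    show ?thesis using cg_trans[OF 1 2] by simp
  qed
qed

lemma sortZ2:
  assumes "length es \<le> length os" "length os \<le> length es + 1"
  shows "cg (P (map Zv (alt os es))) (P (map Zv (alt (sort os) (sort es))))"
proof -
  have 1: "cg (P (map Zv (alt os es))) (P (map Zv (alt os (sort es))))"
  proof (cases os)
    case Nil then have "es = []" using assms by simp
    then show ?thesis using Nil by (simp add: cg_refl)
  next
    case (Cons x os')
    show ?thesis using cg_lmult[OF sortZ[of es os'], of "var (Zv x)"] assms unfolding Cons
      by (simp add: P_Cons)
  qed
  have 2: "cg (P (map Zv (alt os (sort es)))) (P (map Zv (alt (sort os) (sort es))))"
    using assms by (intro sortZ) simp
  show ?thesis using cg_trans[OF 1 2] .
qed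

lemma reduce: "\<exists>s. cg (P l) (const s * P (canon (cont l)))"
proof -
  obtain s where s: "cg (P l) (const s * P (map Yv (yidx l) @ map Zv (zidx l)))"
    using sepYZ by blast
  let ?y = "yidx l" and ?z = "zidx l"
  have ae: "alt (odds ?z) (evens ?z) = ?z" "length (evens ?z) \<le> length (odds ?z)"
    "length (odds ?z) \<le> length (evens ?z) + 1" using alt_odds_evens[of ?z] by auto
  have 2: "cg (const s * P (map Yv ?y @ map Zv ?z)) (const s * P (map Yv (sort ?y) @ map Zv ?z))"
    by (intro cg_const sortY)
  have 3: "cg (const s * P (map Yv (sort ?y) @ map Zv ?z))
     (const s * (P (map Yv (sort ?y)) * P (map Zv (alt (sort (odds ?z)) (sort (evens ?z))))))"
    unfolding P_append
    by (intro cg_const cg_lmult) (metis ae sortZ2)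
  have "canon (cont l) = map Yv (sort ?y) @ map Zv (alt (sort (odds ?z)) (sort (evens ?z)))"
    by (simp add: canon_def cont_def)
  then show ?thesis using cg_trans[OF cg_trans[OF s 2] 3]
    by (intro exI[of _ s]) (simp add: P_append)
qed

end




lemma mono_scale: "(\<Prod>i\<in>#m. (x(v := c * x v)) i) = c ^ count m v * (\<Prod>i\<in>#m. x i :: 'a::comm_ring_1)"
  by (induction m) (auto simp: algebra_simps)

lemma poly_zero:
  assumes inf: "infinite (UNIV::'a::idom set)"
  shows "finite K \<Longrightarrow> (\<forall>x. (\<Sum>m\<in>K. d m * (\<Prod>i\<in>#m. x i)) = (0::'a)) \<Longrightarrow> m \<in> K \<Longrightarrow> d m = 0"
proof (induction "card K" arbitrary: K m rule: less_induct)
  case less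
  note fin = less.prems(1) and z = less.prems(2) and mK = less.prems(3)
  show ?case
  proof (cases "\<forall>m1\<in>K. \<forall>m2\<in>K. m1 = m2")
    case True
    then have K: "K = {m}" using mK by blast
    show ?thesis using z[rule_format, of "\<lambda>_. 1"] unfolding K by simp
  next
    case False
    then obtain m1 m2 where m12: "m1 \<in> K" "m2 \<in> K" "m1 \<noteq> m2" by blast
    then obtain v where v: "count m1 v \<noteq> count m2 v" by (meson multiset_eqI)
    have grp: "(\<Sum>m\<in>{m\<in>K. count m v = k}. d m * (\<Prod>i\<in>#m. x i)) = 0" for k x
    proof -
      define p where "p = (\<Sum>m\<in>K. monom (d m * (\<Prod>i\<in>#m. x i)) (count m v))"
      have "poly p c = 0" for c
      proof -
        have "poly p c = (\<Sum>m\<in>K. d m * (\<Prod>i\<in>#m. (x(v := c * x v)) i))"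
          unfolding p_def poly_sum poly_monom mono_scale by (simp add: algebra_simps)
        then show ?thesis using z by simp
      qed
      then have "p = 0" using inf poly_roots_finite[of p] by auto
      then have "coeff p k = 0" by simp
      moreover have "coeff p k = (\<Sum>m\<in>K. if count m v = k then d m * (\<Prod>i\<in>#m. x i) else 0)"
        unfolding p_def coeff_sum coeff_monom by simp
      ultimately show ?thesis using sum.inter_filter[OF fin] by metis
    qed
    let ?G = "{m'\<in>K. count m' v = count m v}"
    have sub: "?G \<subset> K"
    proof
      show "?G \<subseteq> K" by blast
      show "?G \<noteq> K"
      proof
        assume "?G = K"
        then have "m1 \<in> ?G" "m2 \<in> ?G" using m12 by auto
        then show False using v by simp
      qed
    qed
    have "card ?G < card K" using psubset_card_mono[OF fin sub] .
    moreover have "finite ?G" using fin by simp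
    ultimately show ?thesis using less.hyps[of ?G m] grp mK by blast
  qed
qed




type_synonym gvar = "nat + nat + nat"

definition gsig :: "(gvar \<Rightarrow> 'a::comm_ring_1) \<Rightarrow> var \<Rightarrow> 'a m2" where
  "gsig x v = (case v of
      Yv i \<Rightarrow> (\<chi> r c. if r = c then (if r = 1 then x (Inl i) else - x (Inl i)) else 0)
    | Zv i \<Rightarrow> (\<chi> r c. if r = c then 0 else if r = 1 then x (Inr (Inl i)) else x (Inr (Inr i))))"

lemma two_neq: "(1::2) \<noteq> 2" by simp

lemma gsig_Y: "gsig x (Yv i) $ 1 $ 1 = x (Inl i)" "gsig x (Yv i) $ 1 $ 2 = 0"
   "gsig x (Yv i) $ 2 $ 1 = 0" "gsig x (Yv i) $ 2 $ 2 = - x (Inl i)"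
  by (simp_all add: gsig_def)
lemma gsig_Z: "gsig x (Zv i) $ 1 $ 1 = 0" "gsig x (Zv i) $ 1 $ 2 = x (Inr (Inl i))"
   "gsig x (Zv i) $ 2 $ 1 = x (Inr (Inr i))" "gsig x (Zv i) $ 2 $ 2 = 0"
  by (simp_all add: gsig_def)

lemma valid_gsig: "valid (gsig x)"
  by (simp add: valid_def sl2_even_def sl2_odd_def gsig_Y gsig_Z)

lemma rowY: "word_eval (gsig x) (Word (map Yv ys @ X)) $ 1 $ j =
   prod_list (map (\<lambda>i. x (Inl i)) ys) * word_eval (gsig x) (Word X) $ 1 $ j"
  by (induction ys) (simp_all add: we_Cons mm2 gsig_Y)

lemma rowZ:
  "(length os = length es \<longrightarrow>
      word_eval (gsig x) (Word (map Zv (alt os es))) $ 1 $ 1 =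
        prod_list (map (\<lambda>i. x (Inr (Inl i))) os) * prod_list (map (\<lambda>i. x (Inr (Inr i))) es) \<and>
      word_eval (gsig x) (Word (map Zv (alt os es))) $ 1 $ 2 = 0) \<and>
   (length os = length es + 1 \<longrightarrow>
      word_eval (gsig x) (Word (map Zv (alt os es))) $ 1 $ 1 = 0 \<and>
      word_eval (gsig x) (Word (map Zv (alt os es))) $ 1 $ 2 =
        prod_list (map (\<lambda>i. x (Inr (Inl i))) os) * prod_list (map (\<lambda>i. x (Inr (Inr i))) es))"
proof (induction os arbitrary: es)
  case Nil then show ?case by (simp add: we_Nil mat_def)
next
  case (Cons a os)
  show ?case
  proof (cases es)
    case Nil then show ?thesis by (simp add: we_Cons we_Nil mm2 gsig_Z mat_def)
  next
    case (Cons e es')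
    have r: "word_eval (gsig x) (Word (map Zv (alt (a # os) es))) $ 1 $ j =
       x (Inr (Inl a)) * x (Inr (Inr e)) * word_eval (gsig x) (Word (map Zv (alt os es'))) $ 1 $ j" for j
      unfolding Cons by (simp add: we_Cons mm2 gsig_Z)
    show ?thesis unfolding r using Cons.IH[of es'] unfolding Cons by (simp add: algebra_simps)
  qed
qed

definition rs :: "'a::comm_ring_1 m2 \<Rightarrow> 'a" where "rs M = M$1$1 + M$1$2"

definition enc :: "cont \<Rightarrow> gvar multiset" where
  "enc \<kappa> = image_mset Inl (fst \<kappa>) + image_mset (Inr \<circ> Inl) (fst (snd \<kappa>)) + image_mset (Inr \<circ> Inr) (snd (snd \<kappa>))"

lemma prod_list_sorted: "prod_list (map f (sorted_list_of_multiset M)) = (\<Prod>i\<in>#M. f i)"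
  by (metis mset_map mset_sorted_list_of_multiset prod_mset_prod_list)

lemma rs_canon:
  assumes "size (snd (snd \<kappa>)) \<le> size (fst (snd \<kappa>))" "size (fst (snd \<kappa>)) \<le> size (snd (snd \<kappa>)) + 1"
  shows "rs (word_eval (gsig x) (Word (canon \<kappa>))) = (\<Prod>i\<in>#enc \<kappa>. x i)"
proof -
  obtain Y Od Ev where k: "\<kappa> = (Y, Od, Ev)" by (cases \<kappa>) auto
  let ?os = "sorted_list_of_multiset Od" and ?es = "sorted_list_of_multiset Ev"
  have len: "length ?os = length ?es \<or> length ?os = length ?es + 1"
  proof -
    have "length ?os = size Od" "length ?es = size Ev" by (metis mset_sorted_list_of_multiset size_mset)+
    then show ?thesis using assms unfolding k by simp linarith
  qed
  have "rs (word_eval (gsig x) (Word (map Zv (alt ?os ?es)))) =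
     prod_list (map (\<lambda>i. x (Inr (Inl i))) ?os) * prod_list (map (\<lambda>i. x (Inr (Inr i))) ?es)"
    using len rowZ[of ?os ?es x] unfolding rs_def by auto
  moreover have "rs (word_eval (gsig x) (Word (canon \<kappa>))) =
     prod_list (map (\<lambda>i. x (Inl i)) (sorted_list_of_multiset Y)) * rs (word_eval (gsig x) (Word (map Zv (alt ?os ?es))))"
    unfolding k by (simp add: canon_def rs_def rowY distrib_left)
  ultimately show ?thesis unfolding k
    by (simp add: enc_def prod_list_sorted multiset.map_comp o_def)
qed

lemma content_size: "size (snd (snd (cont l))) \<le> size (fst (snd (cont l)))"
   "size (fst (snd (cont l))) \<le> size (snd (snd (cont l))) + 1"
  using alt_odds_evens[of "zidx l"] by (simp_all add: cont_def)

lemma count_img_inj: "inj f \<Longrightarrow> count (image_mset f M) (f i) = count M i"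
  by (induction M) (auto dest: injD)

lemma count_img_out: "y \<notin> range f \<Longrightarrow> count (image_mset f M) y = 0"
  by (induction M) auto

lemma inj_enc: "inj enc"
proof (rule injI)
  fix k1 k2 assume e: "enc k1 = enc k2"
  have c1: "count (enc k) (Inl i) = count (fst k) i" for k i
    by (simp add: enc_def count_img_inj count_img_out image_iff)
  have c2: "count (enc k) (Inr (Inl i)) = count (fst (snd k)) i" for k i
  proof -
    have "count (image_mset (Inr \<circ> Inl) (fst (snd k))) ((Inr \<circ> Inl) i) = count (fst (snd k)) i"
      by (rule count_img_inj) (simp add: inj_def)
    then show ?thesis by (simp add: enc_def count_img_out image_iff)
  qed
  have c3: "count (enc k) (Inr (Inr i)) = count (snd (snd k)) i" for k i
  proof -
    have "count (image_mset (Inr \<circ> Inr) (snd (snd k))) ((Inr \<circ> Inr) i) = count (snd (snd k)) i"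
      by (rule count_img_inj) (simp add: inj_def)
    then show ?thesis by (simp add: enc_def count_img_out image_iff)
  qed
  have "fst k1 = fst k2" using c1[of k1] c1[of k2] e by (metis multiset_eqI)
  moreover have "fst (snd k1) = fst (snd k2)" using c2[of k1] c2[of k2] e by (metis multiset_eqI)
  moreover have "snd (snd k1) = snd (snd k2)" using c3[of k1] c3[of k2] e by (metis multiset_eqI)
  ultimately show "k1 = k2" by (simp add: prod_eq_iff)
qed

lemma poly_zero_enc:
  assumes inf: "infinite (UNIV::'a::idom set)" and fin: "finite K" and inj: "inj_on E K"
    and z: "\<forall>x. (\<Sum>k\<in>K. d k * (\<Prod>i\<in>#E k. x i)) = (0::'a)" and kK: "k \<in> K"
  shows "d k = 0"
proof -
  let ?d = "\<lambda>m. d (the_inv_into K E m)"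
  have "\<forall>x. (\<Sum>m\<in>E ` K. ?d m * (\<Prod>i\<in>#m. x i)) = 0"
  proof
    fix x
    have "(\<Sum>m\<in>E ` K. ?d m * (\<Prod>i\<in>#m. x i)) = (\<Sum>k\<in>K. ?d (E k) * (\<Prod>i\<in>#E k. x i))"
      by (simp add: sum.reindex[OF inj])
    also have "\<dots> = (\<Sum>k\<in>K. d k * (\<Prod>i\<in>#E k. x i))"
      by (rule sum.cong) (simp_all add: the_inv_into_f_f[OF inj])
    finally show "(\<Sum>m\<in>E ` K. ?d m * (\<Prod>i\<in>#m. x i)) = 0" using z by simp
  qed
  then have "?d (E k) = 0" using poly_zero[OF inf, of "E ` K" ?d "E k"] fin kK by blast
  then show ?thesis by (simp add: the_inv_into_f_f[OF inj kK])
qed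

lemma const_sum: "const (\<Sum>x\<in>A. F x) = (\<Sum>x\<in>A. const (F x) :: 'a::comm_ring_1 ncpoly)"
  by (induction A rule: infinite_finite_induct) (simp_all add: const_zero const_add[symmetric])

lemma rs_sum: "rs (\<Sum>x\<in>A. F x) = (\<Sum>x\<in>A. rs (F x :: 'a::comm_ring_1 m2))"
  by (simp add: rs_def sum.distrib)

lemma rs_smat: "rs (smat c M) = c * rs (M :: 'a::comm_ring_1 m2)"
  by (simp add: rs_def distrib_left)

lemma (in relJ) cg_sum: "(\<And>x. x \<in> A \<Longrightarrow> cg (F x) (G x)) \<Longrightarrow> cg (\<Sum>x\<in>A. F x) (\<Sum>x\<in>A. G x)"
  by (induction A rule: infinite_finite_induct) (simp_all add: cg_refl cg_add)

lemma wg_ideal_gen_wg: "wg_ideal (wg_ideal_gen S :: 'a::comm_ring_1 ncpoly set)"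
  unfolding wg_ideal_gen_def wg_ideal_def two_sided_ideal_def by blast

theorem mainTheorem5:
  assumes "infinite (UNIV :: 'a::idom set)"
  shows "(Id_M2_sl2 :: 'a ncpoly set) =
         wg_ideal_gen {comm (yv 1) (yv 2),
                       zv 1 * zv 2 * zv 3 - zv 3 * zv 2 * zv 1,
                       yv 1 * zv 1 + zv 1 * yv 1}"
  (is "_ = wg_ideal_gen ?S")
proof
  show "wg_ideal_gen ?S \<subseteq> Id_M2_sl2"
    unfolding wg_ideal_gen_def using Id_wg gens_Id by blast
next
  let ?J = "wg_ideal_gen ?S :: 'a ncpoly set"
  have J0: "relJ ?J"
  proof (unfold_locales)
    show "wg_ideal ?J" by (rule wg_ideal_gen_wg)
    show "?S \<subseteq> ?J" unfolding wg_ideal_gen_def by blast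
  qed
  interpret relJ ?J by (rule J0)
  have JId: "?J \<subseteq> Id_M2_sl2"
    unfolding wg_ideal_gen_def using Id_wg gens_Id by blast
  show "Id_M2_sl2 \<subseteq> ?J"
  proof
    fix f :: "'a ncpoly" assume fId: "f \<in> Id_M2_sl2"
    obtain sf where sf: "\<And>l. cg (P l) (const (sf l) * P (canon (cont l)))"
      using reduce by metis
    define C where "C w = cont (word_letters w)" for w
    define e where "e w = Poly_Mapping.lookup f w * sf (word_letters w)" for w
    define g where "g = (\<Sum>w\<in>Poly_Mapping.keys f. const (e w) * P (canon (C w)))"
    have fexp: "f = (\<Sum>w\<in>Poly_Mapping.keys f. const (Poly_Mapping.lookup f w) * P (word_letters w))"
      by (subst ncpoly_expand) (simp add: single_eq_const_P)
    have cfg: "cg f g"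
      unfolding g_def
      apply (subst fexp)
      apply (rule cg_sum)
      using cg_const[OF sf]
      by (simp add: e_def C_def mult.assoc[symmetric] const_mult)
    then have fg: "f - g \<in> ?J" by (simp only: cg_def)
    have tsId: "two_sided_ideal (Id_M2_sl2 :: 'a ncpoly set)" using Id_wg[where 'a='a] unfolding wg_ideal_def by (rule conjunct1)
    have "f - (f - g) \<in> Id_M2_sl2" using ideal_diff[OF tsId fId] fg JId by blast
    then have gId: "g \<in> Id_M2_sl2" by simp
    have ev: "rs (eval (gsig x) g) = (\<Sum>w\<in>Poly_Mapping.keys f. e w * (\<Prod>i\<in>#enc (C w). x i))" for x
      unfolding g_def eval_sum rs_sum eval_const_mult rs_smat eval_P
      unfolding C_def by (intro sum.cong refl) (simp add: rs_canon[OF content_size])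
    let ?K = "C ` Poly_Mapping.keys f"
    define D where "D k = (\<Sum>w\<in>{w\<in>Poly_Mapping.keys f. C w = k}. e w)" for k
    have "(\<Sum>k\<in>?K. D k * (\<Prod>i\<in>#enc k. x i)) = 0" for x
    proof -
      have "(\<Sum>k\<in>?K. D k * (\<Prod>i\<in>#enc k. x i)) = (\<Sum>w\<in>Poly_Mapping.keys f. e w * (\<Prod>i\<in>#enc (C w). x i))"
        by (subst sum.image_gen[where g = C, OF finite_keys]) (auto simp: D_def sum_distrib_right intro!: sum.cong)
      also have "\<dots> = rs (eval (gsig x) g)" by (rule ev[symmetric])
      also have "\<dots> = 0"
      proof -
        have "eval (gsig x) g = 0" using gId valid_gsig[of x] unfolding Id_alt by blast
        then show ?thesis by (simp add: rs_def)
      qed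
      finally show ?thesis .
    qed
    then have z: "\<forall>x. (\<Sum>k\<in>?K. D k * (\<Prod>i\<in>#enc k. x i)) = 0" by blast
    have D0: "k \<in> ?K \<Longrightarrow> D k = 0" for k
      by (rule poly_zero_enc[OF assms finite_imageI[OF finite_keys] inj_on_subset[OF inj_enc subset_UNIV] z])
    have "g = (\<Sum>k\<in>?K. (\<Sum>w\<in>{w\<in>Poly_Mapping.keys f. C w = k}. const (e w) * P (canon (C w))))"
      unfolding g_def by (rule sum.image_gen[OF finite_keys])
    also have "\<dots> = (\<Sum>k\<in>?K. const (D k) * P (canon k))"
      by (rule sum.cong) (auto simp: D_def const_sum sum_distrib_right intro!: sum.cong)
    also have "\<dots> = 0" using D0 by (simp add: const_zero)
    finally have "g = 0" .
    then show "f \<in> ?J" using fg by simp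
  qed
qed


end
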